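(* Let $V$ be a real vector space, $R:V\to\mathbb{R}\cup\{+\infty\}$ and $f:\mathbb{R}^m\to\mathbb{R}\cup\{+\infty\}$ convex, $\Phi:V\to\mathbb{R}^m$ linear, $S$ the set of minimizers of $\min_u R(u)+f(\Phi u)$, and $p\in S$ with $R(p)+f(\Phi p)<+\infty$. Let $K=\mathrm{lin}(\{u: R(u)\le R(p)\})$ and $L=\ker\Phi$. Then the minimal face $F(p,S)$ is invariant by $K\cap L$, i.e. $F(p,S)+(K\cap L)\subseteq F(p,S)$.
   Context: A face of a convex set $C$ is a convex $F\subseteq C$ such that every open segment $]x,y[=\{tx+(1-t)y:0<t<1\}$ ($x\ne y$) contained in $C$ which intersects $F$ is contained in $F$; $F(p,C)$ is the intersection of all faces of $C$ containing $p$. The lineality space of a nonempty convex set $C$ is $\mathrm{lin}(C)=\{v: C+\mathbb{R}v\subseteq C\}$. *)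

theory Defs
  imports "HOL-Analysis.Analysis"
begin

definition convex_ext :: "('a::real_vector \<Rightarrow> ereal) \<Rightarrow> bool" where
  "convex_ext g \<longleftrightarrow>
     (\<forall>x y t. 0 < t \<and> t < 1 \<longrightarrow>
        g ((1 - t) *\<^sub>R x + t *\<^sub>R y) \<le> ereal (1 - t) * g x + ereal t * g y)"

definition is_face :: "'a::real_vector set \<Rightarrow> 'a set \<Rightarrow> bool" where
  "is_face F C \<longleftrightarrow> F \<subseteq> C \<and> convex F \<and>
     (\<forall>x y. x \<noteq> y \<and> open_segment x y \<subseteq> C \<and> open_segment x y \<inter> F \<noteq> {}
        \<longrightarrow> open_segment x y \<subseteq> F)"

definition min_face :: "'a::real_vector \<Rightarrow> 'a set \<Rightarrow> 'a set" where
  "min_face p C = \<Inter> {F. is_face F C \<and> p \<in> F}"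

definition lineality :: "'a::real_vector set \<Rightarrow> 'a set" where
  "lineality C = {v. \<forall>x\<in>C. \<forall>t::real. x + t *\<^sub>R v \<in> C}"

end

theory Submission
  imports Defs
begin

lemma face_Inter:
  assumes "\<FF> \<noteq> {}" "\<And>F. F \<in> \<FF> \<Longrightarrow> is_face F S"
  shows "is_face (\<Inter>\<FF>) S"
proof -
  obtain F0 where F0: "F0 \<in> \<FF>" using assms(1) by blast
  have "\<Inter>\<FF> \<subseteq> S" using F0 assms(2)[OF F0] unfolding is_face_def by blast
  moreover have "convex (\<Inter>\<FF>)" using assms(2) unfolding is_face_def by (intro convex_Inter) blast
  moreover have "\<forall>x y. x \<noteq> y \<and> open_segment x y \<subseteq> S \<and> open_segment x y \<inter> \<Inter>\<FF> \<noteq> {}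
        \<longrightarrow> open_segment x y \<subseteq> \<Inter>\<FF>"
  proof (intro allI impI)
    fix x y assume h: "x \<noteq> y \<and> open_segment x y \<subseteq> S \<and> open_segment x y \<inter> \<Inter>\<FF> \<noteq> {}"
    show "open_segment x y \<subseteq> \<Inter>\<FF>"
    proof (rule Inter_greatest)
      fix F assume "F \<in> \<FF>"
      then show "open_segment x y \<subseteq> F" using h assms(2) unfolding is_face_def by blast
    qed
  qed
  ultimately show ?thesis unfolding is_face_def by blast
qed

lemma line_in_face:
  fixes p v :: "'a::real_vector"
  assumes F: "is_face F S" and pF: "p \<in> F" and line: "\<And>s. p + s *\<^sub>R v \<in> S"
  shows "p + t *\<^sub>R v \<in> F"
proof (cases "t = 0 \<or> v = 0")
  case True then show ?thesis using pF by auto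
next
  case False
  define x where "x = p - t *\<^sub>R v"
  define y where "y = p + (2*t) *\<^sub>R v"
  have xy: "x \<noteq> y"
  proof
    assume "x = y"
    moreover have "y - x = t *\<^sub>R v + (2*t) *\<^sub>R v" unfolding x_def y_def by (simp add: algebra_simps)
    moreover have "t *\<^sub>R v + (2*t) *\<^sub>R v = (t + 2*t) *\<^sub>R v" by (rule scaleR_add_left[symmetric])
    ultimately have "(3*t) *\<^sub>R v = 0" by simp
    then show False using False by simp
  qed
  have gen: "(1 - u) *\<^sub>R x + u *\<^sub>R y = p + ((3*u - 1)*t) *\<^sub>R v" for u
    unfolding x_def y_def by (simp add: algebra_simps flip: scaleR_add_left)
  have sub: "open_segment x y \<subseteq> S"
  proof
    fix w assume "w \<in> open_segment x y"
    then obtain u where "w = (1 - u) *\<^sub>R x + u *\<^sub>R y" by (auto simp: in_segment)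
    then show "w \<in> S" using gen line by simp
  qed
  have "p \<in> open_segment x y"
    unfolding in_segment using xy gen[of "1/3"] by (intro conjI exI[of _ "1/3"]) auto
  then have "open_segment x y \<inter> F \<noteq> {}" using pF by blast
  then have inF: "open_segment x y \<subseteq> F" using F xy sub unfolding is_face_def by blast
  have "p + t *\<^sub>R v \<in> open_segment x y"
    unfolding in_segment using xy gen[of "2/3"] by (intro conjI exI[of _ "2/3"]) auto
  then show ?thesis using inF by blast
qed

lemma scal_decomp:
  fixes a b :: real
  assumes "0 < a" "a < 1" "0 < b" "b < 1"
  shows "\<exists>c \<mu>. 0 < c \<and> c < 1 \<and> 0 < \<mu> \<and> \<mu> \<le> 1 \<and> (1 - \<mu>) * c + \<mu> * a = b"
proof (cases "b \<le> a")
  case True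
  define m where "m = b/(2*a-b)"
  have d: "2*a - b > 0" using assms True by simp
  have e: "m * (2*a - b) = b" using d unfolding m_def by simp
  have "(1 - m) * (b/2) + m * a = b/2 + (m * (2*a - b))/2"
    by (simp add: field_simps)
  also have "\<dots> = b" using e by (simp add: field_simps)
  finally have "(1 - m) * (b/2) + m * a = b" .
  moreover have "0 < m" "m \<le> 1" using assms True d unfolding m_def by (auto simp: field_simps)
  ultimately show ?thesis using assms by (intro exI[of _ "b/2"] exI[of _ m]) auto
next
  case False
  define m where "m = (1 - b)/(1+b-2*a)"
  have d: "1 + b - 2*a > 0" using assms False by simp
  have e: "m * (1 + b - 2*a) = 1 - b" using d unfolding m_def by simp
  have "(1 - m) * ((1+b)/2) + m * a = (1+b)/2 - (m * (1 + b - 2*a))/2"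
    by (simp add: field_simps)
  also have "\<dots> = b" using e by (simp add: field_simps)
  finally have "(1 - m) * ((1+b)/2) + m * a = b" .
  moreover have "0 < m" "m \<le> 1" using assms False d unfolding m_def by (auto simp: field_simps)
  ultimately show ?thesis using assms by (intro exI[of _ "(1+b)/2"] exI[of _ m]) auto
qed

lemma conv_shift:
  fixes w' z v :: "'a::real_vector"
  assumes "convex F" "w' \<in> F" "\<And>s. z + s *\<^sub>R v \<in> F" "0 < \<mu>" "\<mu> \<le> 1"
  shows "(1 - \<mu>) *\<^sub>R w' + \<mu> *\<^sub>R z + t *\<^sub>R v \<in> F"
proof -
  have "(1 - \<mu>) *\<^sub>R w' + \<mu> *\<^sub>R (z + (t/\<mu>) *\<^sub>R v) \<in> F"
    using assms unfolding convex_def by auto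
  moreover have "(1 - \<mu>) *\<^sub>R w' + \<mu> *\<^sub>R (z + (t/\<mu>) *\<^sub>R v) = (1 - \<mu>) *\<^sub>R w' + \<mu> *\<^sub>R z + t *\<^sub>R v"
    using assms(4) by (simp add: algebra_simps)
  ultimately show ?thesis by simp
qed

lemma G_face:
  fixes v :: "'a::real_vector"
  assumes F: "is_face F S"
  shows "is_face {x\<in>F. \<forall>t. x + t *\<^sub>R v \<in> F} S"
proof -
  let ?G = "{x\<in>F. \<forall>t. x + t *\<^sub>R v \<in> F}"
  have FS: "F \<subseteq> S" and cF: "convex F" using F unfolding is_face_def by auto
  have "convex ?G"
    unfolding convex_def
  proof (intro ballI allI impI)
    fix x y and u w :: real assume x: "x \<in> ?G" and y: "y \<in> ?G" and uw: "0 \<le> u" "0 \<le> w" "u + w = 1"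
    show "u *\<^sub>R x + w *\<^sub>R y \<in> ?G"
    proof (intro CollectI conjI allI)
      show "u *\<^sub>R x + w *\<^sub>R y \<in> F" using x y uw cF unfolding convex_def by blast
      fix t
      have "u *\<^sub>R (x + t *\<^sub>R v) + w *\<^sub>R (y + t *\<^sub>R v) \<in> F"
        using x y uw cF unfolding convex_def by blast
      moreover have "u *\<^sub>R x + w *\<^sub>R y + t *\<^sub>R v = u *\<^sub>R (x + t *\<^sub>R v) + w *\<^sub>R (y + t *\<^sub>R v)"
      proof -
        have "u *\<^sub>R (x + t *\<^sub>R v) + w *\<^sub>R (y + t *\<^sub>R v) = u *\<^sub>R x + w *\<^sub>R y + (u *\<^sub>R (t *\<^sub>R v) + w *\<^sub>R (t *\<^sub>R v))"
          by (simp add: scaleR_add_right)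
        also have "u *\<^sub>R (t *\<^sub>R v) + w *\<^sub>R (t *\<^sub>R v) = (u + w) *\<^sub>R (t *\<^sub>R v)" by (rule scaleR_add_left[symmetric])
        finally show ?thesis using uw by simp
      qed
      ultimately show "u *\<^sub>R x + w *\<^sub>R y + t *\<^sub>R v \<in> F" by simp
    qed
  qed
  moreover have "open_segment x y \<subseteq> ?G"
    if xy: "x \<noteq> y" and sS: "open_segment x y \<subseteq> S" and meet: "open_segment x y \<inter> ?G \<noteq> {}" for x y
  proof
    from meet obtain z where zs: "z \<in> open_segment x y" and zG: "z \<in> ?G" by blast
    have segF: "open_segment x y \<subseteq> F" using F xy sS zs zG unfolding is_face_def by blast
    from zs obtain a where a: "0 < a" "a < 1" "z = (1 - a) *\<^sub>R x + a *\<^sub>R y" by (auto simp: in_segment)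
    fix w assume ws: "w \<in> open_segment x y"
    from ws obtain b where b: "0 < b" "b < 1" "w = (1 - b) *\<^sub>R x + b *\<^sub>R y" by (auto simp: in_segment)
    obtain c \<mu> where c: "0 < c" "c < 1" "0 < \<mu>" "\<mu> \<le> 1" "(1 - \<mu>) * c + \<mu> * a = b"
      using scal_decomp[OF a(1,2) b(1,2)] by blast
    define w' where "w' = (1 - c) *\<^sub>R x + c *\<^sub>R y"
    have "w' \<in> open_segment x y" unfolding in_segment w'_def using xy c(1,2) by blast
    then have w'F: "w' \<in> F" using segF by blast
    have gen: "(1 - d) *\<^sub>R x + d *\<^sub>R y = x + d *\<^sub>R (y - x)" for d
      by (simp add: algebra_simps)
    have "(1 - \<mu>) *\<^sub>R w' + \<mu> *\<^sub>R z = x + ((1 - \<mu>) * c + \<mu> * a) *\<^sub>R (y - x)"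
      unfolding w'_def a(3) gen by (simp add: algebra_simps)
    then have weq: "w = (1 - \<mu>) *\<^sub>R w' + \<mu> *\<^sub>R z" using c(5) b(3) gen by simp
    show "w \<in> ?G"
    proof (intro CollectI conjI allI)
      show "w \<in> F" using ws segF by blast
      fix t show "w + t *\<^sub>R v \<in> F"
        unfolding weq by (rule conv_shift[OF cF w'F _ c(3,4)]) (use zG in blast)
    qed
  qed
  ultimately show ?thesis using FS unfolding is_face_def
    by (intro conjI allI impI; (elim conjE)?) auto
qed

theorem mainTheorem6:
  fixes R :: "'a::real_vector \<Rightarrow> ereal"
    and f :: "real ^ 'm \<Rightarrow> ereal"
    and \<Phi> :: "'a \<Rightarrow> real ^ 'm"
    and S :: "'a set"
    and p :: 'a
  assumes R_range: "\<And>u. R u \<noteq> -\<infinity>"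
    and f_range: "\<And>z. f z \<noteq> -\<infinity>"
    and R_convex: "convex_ext R"
    and f_convex: "convex_ext f"
    and \<Phi>_linear: "linear \<Phi>"
    and S_def: "S = {u. \<forall>v. R u + f (\<Phi> u) \<le> R v + f (\<Phi> v)}"
    and p_in: "p \<in> S"
    and p_finite: "R p + f (\<Phi> p) < \<infinity>"
  shows "\<forall>x\<in>min_face p S. \<forall>v\<in>lineality {u. R u \<le> R p} \<inter> {w. \<Phi> w = 0}.
           x + v \<in> min_face p S"
proof (intro ballI)
  fix x v assume xF: "x \<in> min_face p S" and vK: "v \<in> lineality {u. R u \<le> R p} \<inter> {w. \<Phi> w = 0}"
  show "x + v \<in> min_face p S"
  proof (cases "{F. is_face F S \<and> p \<in> F} = {}")
    case True
    have "min_face p S = UNIV" unfolding min_face_def True by simp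
    then show ?thesis by simp
  next
    case False
    let ?FF = "min_face p S"
    have Fface: "is_face ?FF S" unfolding min_face_def
      by (rule face_Inter[OF False]) blast
    have Rle: "R (p + s *\<^sub>R v) \<le> R p" for s
      using vK unfolding lineality_def by auto
    have Phi: "\<Phi> (p + s *\<^sub>R v) = \<Phi> p" for s
      using vK \<Phi>_linear by (simp add: linear_add linear_scale)
    have line: "p + s *\<^sub>R v \<in> S" for s
    proof -
      have "R (p + s *\<^sub>R v) + f (\<Phi> (p + s *\<^sub>R v)) \<le> R p + f (\<Phi> p)"
        unfolding Phi by (rule add_right_mono[OF Rle])
      then show ?thesis using p_in unfolding S_def by (auto intro: order_trans)
    qed
    have lineF: "p + t *\<^sub>R v \<in> ?FF" for t
      unfolding min_face_def
    proof (rule InterI)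
      fix F assume "F \<in> {F. is_face F S \<and> p \<in> F}"
      then show "p + t *\<^sub>R v \<in> F" using line_in_face[of F S p v t] line by blast
    qed
    have "is_face {y\<in>?FF. \<forall>t. y + t *\<^sub>R v \<in> ?FF} S" by (rule G_face[OF Fface])
    moreover have "p \<in> {y\<in>?FF. \<forall>t. y + t *\<^sub>R v \<in> ?FF}"
      using lineF lineF[of 0] by simp
    ultimately have "{y\<in>?FF. \<forall>t. y + t *\<^sub>R v \<in> ?FF} \<in> {F. is_face F S \<and> p \<in> F}" by simp
    then have "?FF \<subseteq> {y\<in>?FF. \<forall>t. y + t *\<^sub>R v \<in> ?FF}"
      unfolding min_face_def[of p S] by (rule Inter_lower)
    then have "x + 1 *\<^sub>R v \<in> ?FF" using xF by blast
    then show ?thesis by simp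
  qed
qed

end
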